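(* Let $n\ge 2$, $m\ge 1$, let $\mathcal{R}=(r_{li})$ be an $(n+1)\times(n+1)$ normalized orthogonal matrix, let $\mathcal{A}\in S_{m,n+1}$ and $\mathcal{B}=\mathcal{R}^m\mathcal{A}$. Then $\mathcal{A}$ is completely decomposable if and only if $\mathcal{B}$ is completely decomposable, and $\mathcal{A}$ is regularly decomposable if and only if $\mathcal{B}$ is regularly decomposable.
   Context: $S_{m,n+1}$ is the space of real symmetric tensors $\mathcal{A}=(a_{i_1\ldots i_m})$ of order $m$ and dimension $n+1$, indices in $\{0,\ldots,n\}$; vectors are $\mathbf{x}=(x_0,\ldots,x_n)^\top$. A normalized orthogonal matrix is a matrix of the form $\mathcal{R}=\begin{pmatrix}1&\mathbf{0}^\top\\ \mathbf{0}&R\end{pmatrix}$ with $R$ an $n\times n$ real orthogonal matrix. $\mathcal{B}=\mathcal{R}^m\mathcal{A}$ means $b_{l_1\ldots l_m}=\sum_{i_1,\ldots,i_m=0}^n a_{i_1\ldots i_m}r_{l_1i_1}\cdots r_{l_mi_m}$. $\mathcal{A}$ is completely decomposable if $\mathcal{A}=\sum_{k=1}^r(\mathbf{u}^{(k)})^{\otimes m}$ for some $\mathbf{u}^{(k)}\in\mathbb{R}^{n+1}$, where $\mathbf{u}^{\otimes m}$ has entries $u_{i_1}\cdots u_{i_m}$. A vector $\mathbf{x}$ is regular if $x_0\ne0$ and $x_0^2=x_1^2+\cdots+x_n^2$. Row tensors: $\mathcal{A}_i=(a_{ii_2\ldots i_m})\in S_{m-1,n+1}$. Regularly decomposable: for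 even $m=2l$, $\mathcal{A}=\sum_{k=1}^r(\mathbf{u}^{(k)})^{\otimes m}$ with all $\mathbf{u}^{(k)}$ regular; for odd $m=2l+1$, $\mathcal{A}_0=\sum_{k=1}^r(\mathbf{u}^{(k)})^{\otimes 2l}$ with all $\mathbf{u}^{(k)}$ regular and $\mathcal{A}_i=\sum_{k=1}^r\frac{u^{(k)}_i}{u^{(k)}_0}(\mathbf{u}^{(k)})^{\otimes 2l}$ for $i=1,\ldots,n$. *)

theory Defs
  imports Complex_Main "HOL-Library.Multiset"
begin

text \<open>Tensors of order m and dimension n+1 are functions on index lists
  (i_1,...,i_m) with entries in {0..n}; outside this index set they are 0.\<close>

definition idx :: "nat \<Rightarrow> nat \<Rightarrow> nat list set" where
  "idx m n = {is. length is = m \<and> set is \<subseteq> {0..n}}"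

definition sym_tensor :: "nat \<Rightarrow> nat \<Rightarrow> (nat list \<Rightarrow> real) \<Rightarrow> bool" where
  "sym_tensor m n A \<longleftrightarrow>
     (\<forall>is\<in>idx m n. \<forall>js. mset js = mset is \<longrightarrow> A js = A is) \<and>
     (\<forall>is. is \<notin> idx m n \<longrightarrow> A is = 0)"

definition normalized_orthogonal :: "nat \<Rightarrow> (nat \<Rightarrow> nat \<Rightarrow> real) \<Rightarrow> bool" where
  "normalized_orthogonal n R \<longleftrightarrow>
     R 0 0 = 1 \<and> (\<forall>i\<in>{1..n}. R 0 i = 0 \<and> R i 0 = 0) \<and>
     (\<forall>i\<in>{1..n}. \<forall>j\<in>{1..n}. (\<Sum>k=1..n. R i k * R j k) = (if i = j then 1 else 0)) \<and>
     (\<forall>i\<in>{1..n}. \<forall>j\<in>{1..n}. (\<Sum>k=1..n. R k i * R k j) = (if i = j then 1 else 0))"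

definition tensor_transform ::
  "nat \<Rightarrow> nat \<Rightarrow> (nat \<Rightarrow> nat \<Rightarrow> real) \<Rightarrow> (nat list \<Rightarrow> real) \<Rightarrow> (nat list \<Rightarrow> real)" where
  "tensor_transform m n R A = (\<lambda>ls. if ls \<in> idx m n then
      (\<Sum>is\<in>idx m n. A is * (\<Prod>k<m. R (ls ! k) (is ! k))) else 0)"

definition tpow_entry :: "(nat \<Rightarrow> real) \<Rightarrow> nat list \<Rightarrow> real" where
  "tpow_entry u is = (\<Prod>k<length is. u (is ! k))"

definition completely_decomposable :: "nat \<Rightarrow> nat \<Rightarrow> (nat list \<Rightarrow> real) \<Rightarrow> bool" where
  "completely_decomposable m n A \<longleftrightarrow>
     (\<exists>(r::nat) (u::nat \<Rightarrow> nat \<Rightarrow> real).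
        \<forall>is\<in>idx m n. A is = (\<Sum>k<r. tpow_entry (u k) is))"

definition regular_vec :: "nat \<Rightarrow> (nat \<Rightarrow> real) \<Rightarrow> bool" where
  "regular_vec n x \<longleftrightarrow> x 0 \<noteq> 0 \<and> (x 0)\<^sup>2 = (\<Sum>i=1..n. (x i)\<^sup>2)"

definition regularly_decomposable :: "nat \<Rightarrow> nat \<Rightarrow> (nat list \<Rightarrow> real) \<Rightarrow> bool" where
  "regularly_decomposable m n A \<longleftrightarrow>
     (if even m then
        (\<exists>(r::nat) (u::nat \<Rightarrow> nat \<Rightarrow> real). (\<forall>k<r. regular_vec n (u k)) \<and>
           (\<forall>is\<in>idx m n. A is = (\<Sum>k<r. tpow_entry (u k) is)))
      else
        (\<exists>(r::nat) (u::nat \<Rightarrow> nat \<Rightarrow> real). (\<forall>k<r. regular_vec n (u k)) \<and>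
           (\<forall>is\<in>idx (m - 1) n. A (0 # is) = (\<Sum>k<r. tpow_entry (u k) is)) \<and>
           (\<forall>i\<in>{1..n}. \<forall>is\<in>idx (m - 1) n.
               A (i # is) = (\<Sum>k<r. u k i / u k 0 * tpow_entry (u k) is))))"

end

theory Submission
  imports Defs
begin

lemma finite_idx: "finite (idx m n)"
proof -
  have "idx m n = {xs. set xs \<subseteq> {0..n} \<and> length xs = m}" by (auto simp: idx_def)
  thus ?thesis using finite_lists_length_eq[of "{0..n}" m] by simp
qed

lemma idx_0: "idx 0 n = {[]}" by (auto simp: idx_def)

lemma idx_Suc: "idx (Suc m) n = (\<lambda>(i,is). i#is) ` ({0..n} \<times> idx m n)"
  by (auto simp: idx_def length_Suc_conv image_iff)

lemma sum_idx_prod: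
  "(\<Sum>is\<in>idx m n. \<Prod>k<m. f k (is!k)) = (\<Prod>k<m. \<Sum>i=0..n. (f k i::real))"
proof (induction m arbitrary: f)
  case 0
  then show ?case by (simp add: idx_0)
next
  case (Suc m)
  have inj: "inj_on (\<lambda>(i,is). i#is) ({0..n} \<times> idx m n)" by (auto simp: inj_on_def)
  have "(\<Sum>is\<in>idx (Suc m) n. \<Prod>k<Suc m. f k (is!k))
      = (\<Sum>p\<in>{0..n} \<times> idx m n. (\<lambda>is. \<Prod>k<Suc m. f k (is!k)) ((\<lambda>(i,is). i#is) p))"
    unfolding idx_Suc by (rule sum.reindex[OF inj, unfolded comp_def])
  also have "\<dots> = (\<Sum>p\<in>{0..n} \<times> idx m n. f 0 (fst p) * (\<Prod>k<m. f (Suc k) (snd p!k)))"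
    by (rule sum.cong) (auto simp del: prod.lessThan_Suc simp add: prod.lessThan_Suc_shift)
  also have "\<dots> = (\<Sum>i=0..n. f 0 i) * (\<Sum>is\<in>idx m n. \<Prod>k<m. f (Suc k) (is!k))"
    by (simp add: sum_product sum.cartesian_product split_def)
  also have "\<dots> = (\<Sum>i=0..n. f 0 i) * (\<Prod>k<m. \<Sum>i=0..n. f (Suc k) i)"
    using Suc.IH[of "\<lambda>k. f (Suc k)"] by simp
  also have "\<dots> = (\<Prod>k<Suc m. \<Sum>i=0..n. f k i)" by (simp del: prod.lessThan_Suc add: prod.lessThan_Suc_shift)
  finally show ?case .
qed

definition Rv :: "nat \<Rightarrow> (nat \<Rightarrow> nat \<Rightarrow> real) \<Rightarrow> (nat \<Rightarrow> real) \<Rightarrow> nat \<Rightarrow> real" where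
  "Rv n R u = (\<lambda>l. \<Sum>i=0..n. R l i * u i)"

lemma T_lin:
  assumes "\<forall>is\<in>idx m n. A is = (\<Sum>k<r. c k * tpow_entry (u k) is)"
    and "ls \<in> idx m n"
  shows "tensor_transform m n R A ls = (\<Sum>k<r. c k * tpow_entry (Rv n R (u k)) ls)"
proof -
  have len: "length ls = m" using assms(2) by (simp add: idx_def)
  have "tensor_transform m n R A ls
      = (\<Sum>is\<in>idx m n. (\<Sum>k<r. c k * tpow_entry (u k) is) * (\<Prod>j<m. R (ls ! j) (is ! j)))"
    using assms by (simp add: tensor_transform_def)
  also have "\<dots> = (\<Sum>k<r. c k * (\<Sum>is\<in>idx m n. \<Prod>j<m. R (ls ! j) (is ! j) * u k (is!j)))"
    apply (simp add: sum_distrib_right sum_distrib_left)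
    apply (subst sum.swap)
    apply (rule sum.cong, simp)
    apply (rule sum.cong, simp)
    apply (simp add: tpow_entry_def idx_def prod.distrib)
    done
  also have "\<dots> = (\<Sum>k<r. c k * tpow_entry (Rv n R (u k)) ls)"
    apply (rule sum.cong, simp)
    apply (subst sum_idx_prod[of "\<lambda>j i. R (ls!j) i * u _ i"])
    apply (simp add: tpow_entry_def len Rv_def)
    done
  finally show ?thesis .
qed

lemma orth_full:
  assumes R: "normalized_orthogonal n R" and "i \<le> n" "j \<le> n"
  shows "(\<Sum>l=0..n. R l i * R l j) = (if i = j then 1 else 0)"
proof -
  have s: "(\<Sum>l=0..n. R l i * R l j) = R 0 i * R 0 j + (\<Sum>l=1..n. R l i * R l j)"
    by (simp add: sum.atLeast_Suc_atMost)
  have R00: "R 0 0 = 1" and Z: "\<And>i. i\<in>{1..n} \<Longrightarrow> R 0 i = 0 \<and> R i 0 = 0"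
    and C: "\<And>i j. i\<in>{1..n} \<Longrightarrow> j\<in>{1..n} \<Longrightarrow> (\<Sum>k=1..n. R k i * R k j) = (if i = j then 1 else 0)"
    using R unfolding normalized_orthogonal_def by blast+
  have Z0: "(\<Sum>l=1..n. R l 0 * g l) = 0" for g :: "nat \<Rightarrow> real"
    by (rule sum.neutral) (simp add: Z)
  have Z0': "(\<Sum>l=1..n. g l * R l 0) = 0" for g :: "nat \<Rightarrow> real"
    by (rule sum.neutral) (simp add: Z)
  show ?thesis
  proof (cases "i = 0")
    case True
    show ?thesis
    proof (cases "j = 0")
      case True
      then show ?thesis using \<open>i = 0\<close> unfolding s using Z0[of "\<lambda>l. R l 0"] by (simp add: R00)
    next
      case False
      then have "j \<in> {1..n}" using assms by auto
      then show ?thesis using \<open>i = 0\<close> False unfolding s by (simp add: Z Z0)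
    qed
  next
    case False
    then have i1: "i \<in> {1..n}" using assms by auto
    show ?thesis
    proof (cases "j = 0")
      case True
      then show ?thesis using i1 False unfolding s by (simp add: Z Z0')
    next
      case False
      then have j1: "j \<in> {1..n}" using assms by auto
      have "R 0 i = 0" using Z[OF i1] by simp
      then show ?thesis using C[OF i1 j1] unfolding s by simp
    qed
  qed
qed

lemma orth_full2:
  assumes R: "normalized_orthogonal n R" and "i \<le> n" "j \<le> n"
  shows "(\<Sum>l=0..n. R i l * R j l) = (if i = j then 1 else 0)"
proof -
  have R': "normalized_orthogonal n (\<lambda>a b. R b a)" using R by (auto simp: normalized_orthogonal_def)
  show ?thesis using orth_full[OF R' assms(2,3)] by simp
qed

lemma Rv_0:
  assumes R: "normalized_orthogonal n R"
  shows "Rv n R u 0 = u 0"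
proof -
  have "Rv n R u 0 = R 0 0 * u 0 + (\<Sum>i=1..n. R 0 i * u i)"
    by (simp add: Rv_def sum.atLeast_Suc_atMost)
  also have "(\<Sum>i=1..n. R 0 i * u i) = 0" using R by (auto simp: normalized_orthogonal_def)
  finally show ?thesis using R by (simp add: normalized_orthogonal_def)
qed

lemma Rv_norm:
  assumes R: "normalized_orthogonal n R"
  shows "(\<Sum>l=0..n. (Rv n R u l)\<^sup>2) = (\<Sum>l=0..n. (u l)\<^sup>2)"
proof -
  have "(\<Sum>l=0..n. (Rv n R u l)\<^sup>2) = (\<Sum>l=0..n. \<Sum>i=0..n. \<Sum>j=0..n. u i * u j * (R l i * R l j))"
    by (simp add: Rv_def power2_eq_square sum_product algebra_simps)
  also have "\<dots> = (\<Sum>i=0..n. \<Sum>j=0..n. u i * u j * (\<Sum>l=0..n. R l i * R l j))"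
  proof -
    have sw: "\<And>g::nat\<Rightarrow>nat\<Rightarrow>nat\<Rightarrow>real. (\<Sum>l=0..n. \<Sum>i=0..n. \<Sum>j=0..n. g l i j) = (\<Sum>i=0..n. \<Sum>j=0..n. \<Sum>l=0..n. g l i j)"
    proof -
      fix g :: "nat\<Rightarrow>nat\<Rightarrow>nat\<Rightarrow>real"
      have "(\<Sum>l=0..n. \<Sum>i=0..n. \<Sum>j=0..n. g l i j) = (\<Sum>i=0..n. \<Sum>l=0..n. \<Sum>j=0..n. g l i j)"
        by (rule sum.swap)
      also have "\<dots> = (\<Sum>i=0..n. \<Sum>j=0..n. \<Sum>l=0..n. g l i j)"
        by (rule sum.cong, simp, rule sum.swap)
      finally show "?thesis g" .
    qed
    show ?thesis by (subst sw) (simp add: sum_distrib_left)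
  qed
  also have "\<dots> = (\<Sum>i=0..n. \<Sum>j=0..n. if i = j then u i * u j else 0)"
    by (rule sum.cong, simp, rule sum.cong, simp) (simp add: orth_full[OF R])
  also have "\<dots> = (\<Sum>l=0..n. (u l)\<^sup>2)"
    by (simp add: power2_eq_square)
  finally show ?thesis .
qed

lemma Rv_regular:
  assumes R: "normalized_orthogonal n R" and u: "regular_vec n u"
  shows "regular_vec n (Rv n R u)"
proof -
  have a: "(\<Sum>l=0..n. (Rv n R u l)\<^sup>2) = (Rv n R u 0)\<^sup>2 + (\<Sum>l=1..n. (Rv n R u l)\<^sup>2)"
    by (simp add: sum.atLeast_Suc_atMost)
  have b: "(\<Sum>l=0..n. (u l)\<^sup>2) = (u 0)\<^sup>2 + (\<Sum>l=1..n. (u l)\<^sup>2)"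
    by (simp add: sum.atLeast_Suc_atMost)
  show ?thesis using Rv_norm[OF R, of u] a b Rv_0[OF R, of u] u by (simp add: regular_vec_def)
qed

lemma T_split:
  assumes "l \<le> n" "is \<in> idx m n"
  shows "tensor_transform (Suc m) n R A (l#is)
     = (\<Sum>j=0..n. R l j * tensor_transform m n R (\<lambda>js. A (j#js)) is)"
proof -
  have inj: "inj_on (\<lambda>(i,is). i#is) ({0..n} \<times> idx m n)" by (auto simp: inj_on_def)
  have mem: "l # is \<in> idx (Suc m) n" using assms by (auto simp: idx_def)
  have "tensor_transform (Suc m) n R A (l#is)
      = (\<Sum>js\<in>idx (Suc m) n. A js * (\<Prod>k<Suc m. R ((l#is) ! k) (js ! k)))"
    using mem by (simp add: tensor_transform_def)
  also have "\<dots> = (\<Sum>p\<in>{0..n} \<times> idx m n. (\<lambda>js. A js * (\<Prod>k<Suc m. R ((l#is) ! k) (js ! k))) ((\<lambda>(i,is). i#is) p))"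
    unfolding idx_Suc by (rule sum.reindex[OF inj, unfolded comp_def])
  also have "\<dots> = (\<Sum>p\<in>{0..n} \<times> idx m n. R l (fst p) * (A (fst p # snd p) * (\<Prod>k<m. R (is ! k) (snd p ! k))))"
    by (rule sum.cong) (auto simp del: prod.lessThan_Suc simp add: prod.lessThan_Suc_shift)
  also have "\<dots> = (\<Sum>j=0..n. R l j * (\<Sum>js\<in>idx m n. A (j # js) * (\<Prod>k<m. R (is ! k) (js ! k))))"
    by (simp add: sum.cartesian_product sum_distrib_left split_def)
  also have "\<dots> = (\<Sum>j=0..n. R l j * tensor_transform m n R (\<lambda>js. A (j#js)) is)"
    using assms by (simp add: tensor_transform_def)
  finally show ?thesis .
qed

lemma idx_nth:
  assumes "xs \<in> idx m n" "k < m" shows "xs ! k \<le> n"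
proof -
  have "length xs = m" "set xs \<subseteq> {0..n}" using assms(1) by (auto simp: idx_def)
  then have "xs ! k \<in> {0..n}" using assms(2) nth_mem by blast
  then show ?thesis by simp
qed

lemma T_inv:
  assumes R: "normalized_orthogonal n R" and ls: "ls \<in> idx m n"
  shows "tensor_transform m n (\<lambda>a b. R b a) (tensor_transform m n R A) ls = A ls"
proof -
  have len: "length ls = m" using ls by (simp add: idx_def)
  have "tensor_transform m n (\<lambda>a b. R b a) (tensor_transform m n R A) ls
     = (\<Sum>js\<in>idx m n. (\<Sum>is\<in>idx m n. A is * (\<Prod>k<m. R (js ! k) (is ! k))) * (\<Prod>k<m. R (js ! k) (ls ! k)))"
    using ls by (simp add: tensor_transform_def)
  also have "\<dots> = (\<Sum>is\<in>idx m n. A is * (\<Sum>js\<in>idx m n. \<Prod>k<m. R (js ! k) (ls ! k) * R (js ! k) (is ! k)))"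
    apply (simp add: sum_distrib_right sum_distrib_left)
    apply (subst sum.swap)
    apply (rule sum.cong, simp)
    apply (rule sum.cong, simp)
    apply (simp add: prod.distrib)
    done
  also have "\<dots> = (\<Sum>is\<in>idx m n. A is * (\<Prod>k<m. if ls ! k = is ! k then 1 else 0))"
  proof (rule sum.cong, simp)
    fix xs assume xs: "xs \<in> idx m n"
    have "(\<Sum>js\<in>idx m n. \<Prod>k<m. R (js ! k) (ls ! k) * R (js ! k) (xs ! k))
        = (\<Prod>k<m. \<Sum>j=0..n. R j (ls ! k) * R j (xs ! k))"
      by (rule sum_idx_prod[of "\<lambda>k j. R j (ls ! k) * R j (xs ! k)"])
    also have "\<dots> = (\<Prod>k<m. if ls ! k = xs ! k then 1 else 0)"
      apply (rule prod.cong, simp)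
      apply (rule orth_full[OF R])
       apply (rule idx_nth[OF ls], simp)
      apply (rule idx_nth[OF xs], simp)
      done
    finally show "A xs * (\<Sum>js\<in>idx m n. \<Prod>k<m. R (js ! k) (ls ! k) * R (js ! k) (xs ! k))
        = A xs * (\<Prod>k<m. if ls ! k = xs ! k then 1 else 0)" by simp
  qed
  also have "\<dots> = (\<Sum>is\<in>idx m n. if is = ls then A is else 0)"
  proof (rule sum.cong, simp)
    fix xs assume xs: "xs \<in> idx m n"
    have li: "length xs = m" using xs by (simp add: idx_def)
    show "A xs * (\<Prod>k<m. if ls ! k = xs ! k then 1 else 0) = (if xs = ls then A xs else 0)"
    proof (cases "xs = ls")
      case True then show ?thesis by simp
    next
      case False
      have "\<exists>k<m. ls ! k \<noteq> xs ! k" using False li len by (auto simp: list_eq_iff_nth_eq)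
      then obtain k where "k < m" "ls ! k \<noteq> xs ! k" by blast
      then have "(\<Prod>k<m. if ls ! k = xs ! k then 1 else (0::real)) = 0"
        by (intro prod_zero) auto
      then show ?thesis using False by simp
    qed
  qed
  also have "\<dots> = A ls" using ls by (simp add: finite_idx)
  finally show ?thesis .
qed

lemma cd_cong:
  assumes "\<forall>is\<in>idx m n. A is = B is"
  shows "completely_decomposable m n A = completely_decomposable m n B"
  using assms unfolding completely_decomposable_def by auto

lemma rd_cong:
  assumes "\<forall>is\<in>idx m n. A is = B is" and "m \<ge> 1"
  shows "regularly_decomposable m n A = regularly_decomposable m n B"
proof -
  have a: "\<forall>is\<in>idx (m-1) n. A (0#is) = B (0#is)"
    using assms by (auto simp: idx_def)
  have b: "\<forall>i\<in>{1..n}. \<forall>is\<in>idx (m-1) n. A (i#is) = B (i#is)"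
    using assms by (auto simp: idx_def)
  show ?thesis using assms(1) a b unfolding regularly_decomposable_def by auto
qed

lemma cd_forward:
  assumes R: "normalized_orthogonal n R" and "completely_decomposable m n A"
  shows "completely_decomposable m n (tensor_transform m n R A)"
proof -
  obtain r :: nat and u :: "nat \<Rightarrow> nat \<Rightarrow> real" where u: "\<forall>is\<in>idx m n. A is = (\<Sum>k<r. tpow_entry (u k) is)"
    using assms(2) unfolding completely_decomposable_def by blast
  have u': "\<forall>is\<in>idx m n. A is = (\<Sum>k<r. 1 * tpow_entry (u k) is)" using u by simp
  have "\<forall>ls\<in>idx m n. tensor_transform m n R A ls = (\<Sum>k<r. tpow_entry (Rv n R (u k)) ls)"
    using T_lin[OF u'] by simp
  then show ?thesis unfolding completely_decomposable_def
    by (intro exI[of _ r] exI[of _ "\<lambda>k. Rv n R (u k)"]) blast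
qed

lemma rd_forward:
  assumes R: "normalized_orthogonal n R" and m: "m \<ge> 1" and "regularly_decomposable m n A"
  shows "regularly_decomposable m n (tensor_transform m n R A)"
proof (cases "even m")
  case True
  obtain r :: nat and u :: "nat \<Rightarrow> nat \<Rightarrow> real" where reg: "\<forall>k<r. regular_vec n (u k)"
    and u: "\<forall>is\<in>idx m n. A is = (\<Sum>k<r. tpow_entry (u k) is)"
    using assms(3) True unfolding regularly_decomposable_def by auto
  have u': "\<forall>is\<in>idx m n. A is = (\<Sum>k<r. 1 * tpow_entry (u k) is)" using u by simp
  have f2: "\<forall>ls\<in>idx m n. tensor_transform m n R A ls = (\<Sum>k<r. tpow_entry (Rv n R (u k)) ls)"
    using T_lin[OF u'] by simp
  have f1: "\<forall>k<r. regular_vec n (Rv n R (u k))" using reg Rv_regular[OF R] by blast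
  have X: "(\<forall>k<r. regular_vec n (Rv n R (u k))) \<and>
     (\<forall>is\<in>idx m n. tensor_transform m n R A is = (\<Sum>k<r. tpow_entry (Rv n R (u k)) is))"
    by (rule conjI[OF f1 f2])
  have "\<exists>(r::nat) (u::nat \<Rightarrow> nat \<Rightarrow> real). (\<forall>k<r. regular_vec n (u k)) \<and>
     (\<forall>is\<in>idx m n. tensor_transform m n R A is = (\<Sum>k<r. tpow_entry (u k) is))"
    by (rule exI[of _ r], rule exI[of _ "\<lambda>k. Rv n R (u k)"]) (rule X)
  then show ?thesis unfolding regularly_decomposable_def if_P[OF True] .
next
  case False
  obtain m' where m': "m = Suc m'" using m by (cases m) auto
  obtain r :: nat and u :: "nat \<Rightarrow> nat \<Rightarrow> real" where reg: "\<forall>k<r. regular_vec n (u k)"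
    and u0: "\<forall>is\<in>idx (m - 1) n. A (0 # is) = (\<Sum>k<r. tpow_entry (u k) is)"
    and ui: "\<forall>i\<in>{1..n}. \<forall>is\<in>idx (m - 1) n.
               A (i # is) = (\<Sum>k<r. u k i / u k 0 * tpow_entry (u k) is)"
    using assms(3) False unfolding regularly_decomposable_def by auto
  have nz: "\<And>k. k < r \<Longrightarrow> u k 0 \<noteq> 0" using reg by (simp add: regular_vec_def)
  have rows: "\<forall>is\<in>idx m' n. A (j # is) = (\<Sum>k<r. u k j / u k 0 * tpow_entry (u k) is)"
    if "j \<le> n" for j
  proof (cases "j = 0")
    case True
    then show ?thesis using u0 nz m' by simp
  next
    case False
    then show ?thesis using ui that m' by auto
  qed
  define v where "v k = Rv n R (u k)" for k
  have v0: "v k 0 = u k 0" for k using Rv_0[OF R] by (simp add: v_def)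
  have key: "tensor_transform m n R A (l # is) = (\<Sum>k<r. v k l / v k 0 * tpow_entry (v k) is)"
    if l: "l \<le> n" and xs: "is \<in> idx m' n" for l "is"
  proof -
    have "tensor_transform m n R A (l # is)
        = (\<Sum>j=0..n. R l j * tensor_transform m' n R (\<lambda>js. A (j#js)) is)"
      unfolding m' by (rule T_split[OF l xs])
    also have "\<dots> = (\<Sum>j=0..n. R l j * (\<Sum>k<r. u k j / u k 0 * tpow_entry (v k) is))"
      apply (rule sum.cong, simp)
      using T_lin[OF rows xs] by (simp add: v_def)
    also have "\<dots> = (\<Sum>k<r. (\<Sum>j=0..n. R l j * u k j) / u k 0 * tpow_entry (v k) is)"
      apply (simp only: sum_distrib_left)
      apply (subst sum.swap)
      apply (rule sum.cong, simp)
      apply (simp add: sum_divide_distrib sum_distrib_right)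
      apply (rule sum.cong, simp)
      apply (simp add: mult.assoc)
      done
    also have "\<dots> = (\<Sum>k<r. v k l / v k 0 * tpow_entry (v k) is)"
      unfolding v0 by (simp add: v_def Rv_def)
    finally show ?thesis .
  qed
  have f1: "\<forall>k<r. regular_vec n (v k)" using reg Rv_regular[OF R] by (simp add: v_def)
  have f2: "\<forall>is\<in>idx (m - 1) n. tensor_transform m n R A (0 # is) = (\<Sum>k<r. tpow_entry (v k) is)"
  proof
    fix "is" assume "is \<in> idx (m - 1) n"
    then have "tensor_transform m n R A (0 # is) = (\<Sum>k<r. v k 0 / v k 0 * tpow_entry (v k) is)"
      using key[of 0 "is"] m' by simp
    also have "\<dots> = (\<Sum>k<r. tpow_entry (v k) is)"
      by (rule sum.cong) (auto simp: v0 nz)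
    finally show "tensor_transform m n R A (0 # is) = (\<Sum>k<r. tpow_entry (v k) is)" .
  qed
  have f3: "\<forall>i\<in>{1..n}. \<forall>is\<in>idx (m - 1) n.
               tensor_transform m n R A (i # is) = (\<Sum>k<r. v k i / v k 0 * tpow_entry (v k) is)"
  proof (intro ballI)
    fix i xs assume i: "i \<in> {1..n}" and xs: "xs \<in> idx (m - 1) n"
    show "tensor_transform m n R A (i # xs) = (\<Sum>k<r. v k i / v k 0 * tpow_entry (v k) xs)"
      using key[of i xs] i xs m' by simp
  qed
  have X: "(\<forall>k<r. regular_vec n (v k)) \<and>
           (\<forall>is\<in>idx (m - 1) n. tensor_transform m n R A (0 # is) = (\<Sum>k<r. tpow_entry (v k) is)) \<and>
           (\<forall>i\<in>{1..n}. \<forall>is\<in>idx (m - 1) n.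
               tensor_transform m n R A (i # is) = (\<Sum>k<r. v k i / v k 0 * tpow_entry (v k) is))"
    by (rule conjI[OF f1 conjI[OF f2 f3]])
  have "\<exists>(r::nat) (u::nat \<Rightarrow> nat \<Rightarrow> real). (\<forall>k<r. regular_vec n (u k)) \<and>
           (\<forall>is\<in>idx (m - 1) n. tensor_transform m n R A (0 # is) = (\<Sum>k<r. tpow_entry (u k) is)) \<and>
           (\<forall>i\<in>{1..n}. \<forall>is\<in>idx (m - 1) n.
               tensor_transform m n R A (i # is) = (\<Sum>k<r. u k i / u k 0 * tpow_entry (u k) is))"
    by (rule exI[of _ r], rule exI[of _ v]) (rule X)
  then show ?thesis unfolding regularly_decomposable_def if_not_P[OF False] .
qed

theorem theorem4p1:
  fixes n m :: nat and R :: "nat \<Rightarrow> nat \<Rightarrow> real" and A :: "nat list \<Rightarrow> real"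
  assumes "n \<ge> 2" and "m \<ge> 1"
    and "normalized_orthogonal n R"
    and "sym_tensor m n A"
  shows "(completely_decomposable m n A \<longleftrightarrow>
            completely_decomposable m n (tensor_transform m n R A)) \<and>
         (regularly_decomposable m n A \<longleftrightarrow>
            regularly_decomposable m n (tensor_transform m n R A))"
proof -
  have R: "normalized_orthogonal n R" by fact
  have R': "normalized_orthogonal n (\<lambda>a b. R b a)" using R by (auto simp: normalized_orthogonal_def)
  have inv: "\<forall>is\<in>idx m n. tensor_transform m n (\<lambda>a b. R b a) (tensor_transform m n R A) is = A is"
    using T_inv[OF R] by blast
  show ?thesis
  proof (intro conjI iffI)
    assume "completely_decomposable m n A"
    then show "completely_decomposable m n (tensor_transform m n R A)" by (rule cd_forward[OF R])
  next
    assume "completely_decomposable m n (tensor_transform m n R A)"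
    then have "completely_decomposable m n (tensor_transform m n (\<lambda>a b. R b a) (tensor_transform m n R A))"
      by (rule cd_forward[OF R'])
    then show "completely_decomposable m n A" using cd_cong[OF inv] by blast
  next
    assume "regularly_decomposable m n A"
    then show "regularly_decomposable m n (tensor_transform m n R A)" by (rule rd_forward[OF R assms(2)])
  next
    assume "regularly_decomposable m n (tensor_transform m n R A)"
    then have "regularly_decomposable m n (tensor_transform m n (\<lambda>a b. R b a) (tensor_transform m n R A))"
      by (rule rd_forward[OF R' assms(2)])
    then show "regularly_decomposable m n A" using rd_cong[OF inv assms(2)] by blast
  qed
qed

end
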